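(* Define $F(0)=1$, $F(1)=2$ and $F(n)=F(n-1)+F(n-2)$ for $n\ge 2$ (so $\sum_{n\ge0}F(n)q^n=\frac{1+q}{1-q-q^2}$). For a word $w=w_1\cdots w_n$ over $\{1,2,3\}$ let $s(w)=|\{i : 1\le i\le n-2,\ w_{i+2}-w_i=2\}|$. Then for every $n\ge 0$, the number of words $w\in\{1,2,3\}^{2n}$ with $s(w)=0$ is $F(2n)^2$, and the number of words $w\in\{1,2,3\}^{2n+1}$ with $s(w)=0$ is $F(2n)F(2n+2)$.
   Context: The condition $s(w)=0$ means $w$ avoids the place-difference-value pattern $(12,(\mathbb{P},\{2\},\mathbb{P}),\{(1,2,\{2\})\},(\mathbb{P},\mathbb{P}))$, i.e. there is no $i$ with $w_{i+2}=w_i+2$. *)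

theory Defs
  imports Main
begin

fun F :: "nat \<Rightarrow> nat" where
  "F 0 = 1"
| "F (Suc 0) = 2"
| "F (Suc (Suc n)) = F (Suc n) + F n"

text \<open>s(w): number of positions i (1-based, 1 <= i <= n-2) with w_(i+2) - w_i = 2.
  Here lists are 0-indexed, so i ranges over i + 2 < length w.\<close>
definition s :: "nat list \<Rightarrow> nat" where
  "s w = card {i. i + 2 < length w \<and> int (w ! (i + 2)) - int (w ! i) = 2}"

definition words :: "nat \<Rightarrow> nat list set" where
  "words n = {w. length w = n \<and> set w \<subseteq> {1, 2, 3}}"

end

theory Submission
  imports Defs
begin

definition P :: "nat list \<Rightarrow> bool" where
  "P w = (\<forall>i. i + 2 < length w \<longrightarrow> int (w ! (i + 2)) - int (w ! i) \<noteq> 2)"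

definition D :: "nat \<Rightarrow> nat \<Rightarrow> nat \<Rightarrow> nat list set" where
  "D m a b = {w. length w = m \<and> set w \<subseteq> {1,2,3} \<and> P (a#b#w)}"

definition C :: "nat \<Rightarrow> nat set" where
  "C a = {c\<in>{1,2,3}. int c - int a \<noteq> 2}"

primrec e :: "nat \<Rightarrow> nat \<Rightarrow> nat" where
  "e 0 a = 1"
| "e (Suc k) a = (\<Sum>c\<in>C a. e k c)"

lemma P_cons3: "P (a#b#c#w) = (int c - int a \<noteq> 2 \<and> P (b#c#w))"
proof
  assume h: "P (a#b#c#w)"
  have "int c - int a \<noteq> 2" using h[unfolded P_def, rule_format, of 0] by simp
  moreover have "P (b#c#w)" unfolding P_def
  proof (intro allI impI)
    fix i assume "i + 2 < length (b#c#w)"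
    then show "int ((b#c#w) ! (i + 2)) - int ((b#c#w) ! i) \<noteq> 2"
      using h[unfolded P_def, rule_format, of "Suc i"] by simp
  qed
  ultimately show "int c - int a \<noteq> 2 \<and> P (b#c#w)" by blast
next
  assume h: "int c - int a \<noteq> 2 \<and> P (b#c#w)"
  show "P (a#b#c#w)" unfolding P_def
  proof (intro allI impI)
    fix i assume i: "i + 2 < length (a#b#c#w)"
    show "int ((a#b#c#w) ! (i + 2)) - int ((a#b#c#w) ! i) \<noteq> 2"
    proof (cases i)
      case 0 then show ?thesis using h by simp
    next
      case (Suc j) then show ?thesis using h[THEN conjunct2, unfolded P_def, rule_format, of j] i by simp
    qed
  qed
qed

lemma D_Suc: "D (Suc m) a b = (\<Union>c\<in>C a. (#) c ` D m b c)"
proof (rule set_eqI)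
  fix w
  show "w \<in> D (Suc m) a b \<longleftrightarrow> w \<in> (\<Union>c\<in>C a. (#) c ` D m b c)"
  proof (cases w)
    case Nil then show ?thesis by (auto simp: D_def)
  next
    case (Cons c w') then show ?thesis by (auto simp: D_def C_def P_cons3)
  qed
qed

lemma finite_D: "finite (D m a b)"
proof -
  have "D m a b \<subseteq> {w. set w \<subseteq> {1,2,3} \<and> length w = m}" by (auto simp: D_def)
  moreover have "finite {w. set w \<subseteq> {1,2,3::nat} \<and> length w = m}"
    by (rule finite_lists_length_eq) simp
  ultimately show ?thesis by (rule finite_subset)
qed

lemma card_D: "card (D m a b) = e ((m+1) div 2) a * e (m div 2) b"
proof (induction m arbitrary: a b)
  case 0
  have "D 0 a b = {[]}" by (auto simp: D_def P_def)
  then show ?case by simp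
next
  case (Suc m)
  have fC: "finite (C a)" by (simp add: C_def)
  have "card (D (Suc m) a b) = (\<Sum>c\<in>C a. card ((#) c ` D m b c))"
    unfolding D_Suc
    by (rule card_UN_disjoint) (auto simp: fC finite_D)
  also have "\<dots> = (\<Sum>c\<in>C a. card (D m b c))"
    by (rule sum.cong) (auto simp: card_image)
  also have "\<dots> = (\<Sum>c\<in>C a. e ((m+1) div 2) b * e (m div 2) c)"
    using Suc.IH by simp
  also have "\<dots> = e ((m+1) div 2) b * e (Suc (m div 2)) a"
    by (simp add: sum_distrib_left)
  also have "Suc (m div 2) = (Suc m + 1) div 2" by simp
  also have "(m+1) div 2 = Suc m div 2" by simp
  finally show ?case by simp
qed

lemma C1: "C (Suc 0) = {1,2}" by (auto simp: C_def)
lemma C2: "C 2 = {1,2,3}" by (auto simp: C_def)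
lemma C3: "C 3 = {1,2,3}" by (auto simp: C_def)

lemma e_closed: "e k 2 = F (2*k) \<and> e k 3 = F (2*k) \<and> e k 1 + F (2*k) = F (Suc (2*k))"
proof (induction k)
  case 0 then show ?case by simp
next
  case (Suc k)
  have eq: "2 * Suc k = Suc (Suc (2*k))" by simp
  show ?case unfolding eq using Suc by (simp add: C1 C2 C3)
qed

lemma P22: assumes "set w \<subseteq> {1,2,3}" shows "P (2#2#w) = P w"
proof
  assume h: "P (2#2#w)"
  show "P w" unfolding P_def
  proof (intro allI impI)
    fix i assume "i + 2 < length w"
    then show "int (w ! (i + 2)) - int (w ! i) \<noteq> 2"
      using h[unfolded P_def, rule_format, of "Suc (Suc i)"] by simp
  qed
next
  assume h: "P w"
  show "P (2#2#w)" unfolding P_def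
  proof (intro allI impI)
    fix i assume i: "i + 2 < length (2#2#w)"
    show "int ((2#2#w) ! (i + 2)) - int ((2#2#w) ! i) \<noteq> 2"
    proof (cases i)
      case 0
      then have "w ! 0 \<in> set w" using i by simp
      then have "w ! 0 \<le> 3" using assms by auto
      then show ?thesis using 0 by simp
    next
      case (Suc j)
      show ?thesis
      proof (cases j)
        case 0
        then have "w ! 1 \<in> set w" using i Suc by simp
        then have "w ! 1 \<le> 3" using assms by auto
        then show ?thesis using 0 Suc by simp
      next
        case (Suc k)
        then show ?thesis using h[unfolded P_def, rule_format, of k] i \<open>i = Suc j\<close> by simp
      qed
    qed
  qed
qed

lemma s0: "(s w = 0) = P w"
proof -
  have "finite {i. i + 2 < length w \<and> int (w ! (i + 2)) - int (w ! i) = 2}"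
    by (rule finite_subset[of _ "{..<length w}"]) auto
  then show ?thesis unfolding s_def P_def by auto
qed

lemma count: "card {w \<in> words m. s w = 0} = F (2 * ((m+1) div 2)) * F (2 * (m div 2))"
proof -
  have "{w \<in> words m. s w = 0} = D m 2 2"
    by (auto simp: words_def D_def s0 P22)
  then show ?thesis using card_D e_closed by simp
qed

theorem mainTheorem5:
  fixes n :: nat
  shows "card {w \<in> words (2 * n). s w = 0} = F (2 * n) ^ 2
       \<and> card {w \<in> words (2 * n + 1). s w = 0} = F (2 * n) * F (2 * n + 2)"
proof
  show "card {w \<in> words (2 * n). s w = 0} = F (2 * n) ^ 2"
    using count[of "2*n"] by (simp add: power2_eq_square)
  have a: "(2*n+1+1) div 2 = n + 1" and b: "(2*n+1) div 2 = n" by simp_all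
  show "card {w \<in> words (2 * n + 1). s w = 0} = F (2 * n) * F (2 * n + 2)"
    using count[of "2*n+1"] unfolding a b by (simp add: mult.commute)
qed

end
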